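(* Let $\mu$ be a probability distribution on $Q_d$ such that $\mu(X)\ge\mu(Y)$ whenever $X\subseteq Y$. Then $(\mathbf 0,\mathbf 0)$ is an equilibrium. Similarly, if $\mu(X)\le\mu(Y)$ whenever $X\subseteq Y$, then $(\mathbf 1,\mathbf 1)$ is an equilibrium.
   Context: $Q_d=\{0,1\}^d$ with the Hamming distance $d(X,Y)=|\{i: x_i\neq y_i\}|$; for $X,Y\in Q_d$, $X\subseteq Y$ means $x_i\le y_i$ for all $i$. A probability distribution on $Q_d$ is a function $\mu:Q_d\to\mathbb R_{\ge0}$ with $\sum_{V\in Q_d}\mu(V)=1$, extended to subsets by $\mu(\mathcal A)=\sum_{V\in\mathcal A}\mu(V)$. For $A,B\in Q_d$ let $V(A,B)=\{X\in Q_d: d(X,A)<d(X,B)\}$ and $T(A,B)=\{X\in Q_d: d(X,A)=d(X,B)\}$. Payoffs: $P_1(A,B)=\mu(V(A,B))+\frac12\mu(T(A,B))$, $P_2(A,B)=\mu(V(B,A))+\frac12\mu(T(A,B))$. $(A,B)$ is an equilibrium if $P_1(A,B)\ge P_1(A',B)$ for all $A'$ and $P_2(A,B)\ge P_2(A,B')$ for all $B'$. $\mathbf 0=(0,\dots,0)$, $\mathbf 1=(1,\dots,1)$. *)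

theory Defs
  imports Complex_Main
begin

text \<open>The hypercube Q_d: 0/1-vectors of length d, represented as bool lists
  (True = 1, False = 0).\<close>
definition cube :: "nat \<Rightarrow> bool list set" where
  "cube d = {xs. length xs = d}"

definition hamming :: "bool list \<Rightarrow> bool list \<Rightarrow> nat" where
  "hamming X Y = card {i. i < length X \<and> X ! i \<noteq> Y ! i}"

definition vsubset :: "bool list \<Rightarrow> bool list \<Rightarrow> bool" where
  "vsubset X Y \<longleftrightarrow> length X = length Y \<and> (\<forall>i < length X. X ! i \<longrightarrow> Y ! i)"

definition prob_dist :: "nat \<Rightarrow> (bool list \<Rightarrow> real) \<Rightarrow> bool" where
  "prob_dist d \<mu> \<longleftrightarrow> (\<forall>V \<in> cube d. \<mu> V \<ge> 0) \<and> (\<Sum>V \<in> cube d. \<mu> V) = 1"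

definition meas :: "(bool list \<Rightarrow> real) \<Rightarrow> bool list set \<Rightarrow> real" where
  "meas \<mu> S = (\<Sum>V \<in> S. \<mu> V)"

definition Vor :: "nat \<Rightarrow> bool list \<Rightarrow> bool list \<Rightarrow> bool list set" where
  "Vor d A B = {X \<in> cube d. hamming X A < hamming X B}"

definition Tie :: "nat \<Rightarrow> bool list \<Rightarrow> bool list \<Rightarrow> bool list set" where
  "Tie d A B = {X \<in> cube d. hamming X A = hamming X B}"

definition payoff1 :: "nat \<Rightarrow> (bool list \<Rightarrow> real) \<Rightarrow> bool list \<Rightarrow> bool list \<Rightarrow> real" where
  "payoff1 d \<mu> A B = meas \<mu> (Vor d A B) + meas \<mu> (Tie d A B) / 2"

definition payoff2 :: "nat \<Rightarrow> (bool list \<Rightarrow> real) \<Rightarrow> bool list \<Rightarrow> bool list \<Rightarrow> real" where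
  "payoff2 d \<mu> A B = meas \<mu> (Vor d B A) + meas \<mu> (Tie d A B) / 2"

definition equilibrium :: "nat \<Rightarrow> (bool list \<Rightarrow> real) \<Rightarrow> bool list \<Rightarrow> bool list \<Rightarrow> bool" where
  "equilibrium d \<mu> A B \<longleftrightarrow> A \<in> cube d \<and> B \<in> cube d \<and>
     (\<forall>A' \<in> cube d. payoff1 d \<mu> A B \<ge> payoff1 d \<mu> A' B) \<and>
     (\<forall>B' \<in> cube d. payoff2 d \<mu> A B \<ge> payoff2 d \<mu> A B')"

definition zeros :: "nat \<Rightarrow> bool list" where "zeros d = replicate d False"
definition ones :: "nat \<Rightarrow> bool list" where "ones d = replicate d True"

end

theory Submission
  imports Defs
begin

fun dd :: "bool list \<Rightarrow> bool list \<Rightarrow> int" where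
  "dd (a#A) (x#X) = (if a then (if x then 1 else -1) else 0) + dd A X"
| "dd _ _ = 0"

lemma finite_cube: "finite (cube d)"
proof -
  have "cube d = {xs. set xs \<subseteq> UNIV \<and> length xs = d}" by (auto simp: cube_def)
  then show ?thesis using finite_lists_length_eq[of "UNIV::bool set" d] by simp
qed

lemma cube_0: "cube 0 = {[]}" by (auto simp: cube_def)

lemma cube_Suc: "cube (Suc d) = Cons True ` cube d \<union> Cons False ` cube d"
proof
  show "cube (Suc d) \<subseteq> Cons True ` cube d \<union> Cons False ` cube d"
  proof
    fix X assume "X \<in> cube (Suc d)"
    then obtain x X' where "X = x#X'" "length X' = d" by (cases X) (auto simp: cube_def)
    then show "X \<in> Cons True ` cube d \<union> Cons False ` cube d"
      by (cases x) (auto simp: cube_def)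
  qed
qed (auto simp: cube_def)

lemma sum_cube_Suc:
  "(\<Sum>X\<in>cube (Suc d). f X) = (\<Sum>X\<in>cube d. f (True#X) + f (False#X))"
proof -
  have "(\<Sum>X\<in>cube (Suc d). f X) = (\<Sum>X\<in>Cons True ` cube d. f X) + (\<Sum>X\<in>Cons False ` cube d. f X)"
    unfolding cube_Suc by (rule sum.union_disjoint) (auto simp: finite_cube)
  also have "\<dots> = (\<Sum>X\<in>cube d. f (True#X)) + (\<Sum>X\<in>cube d. f (False#X))"
    by (simp add: sum.reindex)
  finally show ?thesis by (simp add: sum.distrib)
qed

lemma vsubset_Cons: "vsubset (x#X) (y#Y) \<longleftrightarrow> (x \<longrightarrow> y) \<and> vsubset X Y"
  unfolding vsubset_def
  by (auto simp: nth_Cons' less_Suc_eq_0_disj) 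

lemma vsubset_refl: "vsubset X X" by (simp add: vsubset_def)

lemma core:
  fixes \<mu> :: "bool list \<Rightarrow> real"
  assumes "length A = d" "\<forall>X\<in>cube d. \<forall>Y\<in>cube d. vsubset X Y \<longrightarrow> \<mu> Y \<le> \<mu> X"
  shows "(\<Sum>X\<in>cube d. (if dd A X > t then \<mu> X else 0) - (if dd A X < -t then \<mu> X else 0)) \<le> 0"
  using assms
proof (induction d arbitrary: A \<mu> t)
  case 0
  then show ?case unfolding cube_0 by auto
next
  case (Suc d)
  obtain a A' where A: "A = a#A'" "length A' = d" using Suc.prems(1) by (cases A) auto
  define \<mu>1 where "\<mu>1 = (\<lambda>X. \<mu> (True#X))"
  define \<mu>0 where "\<mu>0 = (\<lambda>X. \<mu> (False#X))"
  have inC: "X \<in> cube d \<Longrightarrow> b#X \<in> cube (Suc d)" for X b by (simp add: cube_def)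
  have m1: "\<forall>X\<in>cube d. \<forall>Y\<in>cube d. vsubset X Y \<longrightarrow> \<mu>1 Y \<le> \<mu>1 X"
    using Suc.prems(2) inC by (auto simp: \<mu>1_def vsubset_Cons)
  have m0: "\<forall>X\<in>cube d. \<forall>Y\<in>cube d. vsubset X Y \<longrightarrow> \<mu>0 Y \<le> \<mu>0 X"
    using Suc.prems(2) inC by (auto simp: \<mu>0_def vsubset_Cons)
  have m10: "X \<in> cube d \<Longrightarrow> \<mu>1 X \<le> \<mu>0 X" for X
    using Suc.prems(2) inC[of X] by (auto simp: \<mu>1_def \<mu>0_def vsubset_Cons vsubset_refl)
  let ?g = "\<lambda>m t X. (if dd A' X > t then m X else 0) - (if dd A' X < -t then m X else (0::real))"
  show ?case
  proof (cases a)
    case True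
    have "(\<Sum>X\<in>cube (Suc d). (if dd A X > t then \<mu> X else 0) - (if dd A X < -t then \<mu> X else 0))
        = (\<Sum>X\<in>cube d. (if 1 + dd A' X > t then \<mu>1 X else 0) - (if 1 + dd A' X < -t then \<mu>1 X else 0)
             + ((if -1 + dd A' X > t then \<mu>0 X else 0) - (if -1 + dd A' X < -t then \<mu>0 X else 0)))"
      unfolding sum_cube_Suc \<mu>1_def \<mu>0_def using True A by simp
    also have "\<dots> \<le> (\<Sum>X\<in>cube d. ?g \<mu>1 (t+1) X + ?g \<mu>0 (t-1) X)"
      by (rule sum_mono) (use m10 in auto)
    also have "\<dots> = (\<Sum>X\<in>cube d. ?g \<mu>1 (t+1) X) + (\<Sum>X\<in>cube d. ?g \<mu>0 (t-1) X)"
      by (rule sum.distrib)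
    also have "\<dots> \<le> 0" using Suc.IH[OF A(2) m1, of "t+1"] Suc.IH[OF A(2) m0, of "t-1"] by simp
    finally show ?thesis .
  next
    case False
    have "(\<Sum>X\<in>cube (Suc d). (if dd A X > t then \<mu> X else 0) - (if dd A X < -t then \<mu> X else 0))
        = (\<Sum>X\<in>cube d. ?g \<mu>1 t X) + (\<Sum>X\<in>cube d. ?g \<mu>0 t X)"
      unfolding sum_cube_Suc sum.distrib[symmetric] \<mu>1_def \<mu>0_def using False A by simp
    also have "\<dots> \<le> 0" using Suc.IH[OF A(2) m1, of t] Suc.IH[OF A(2) m0, of t] by simp
    finally show ?thesis .
  qed
qed

lemma hamming_Nil: "hamming [] Y = 0" by (simp add: hamming_def)

lemma hamming_Cons: "hamming (x#X) (y#Y) = (if x \<noteq> y then 1 else 0) + hamming X Y"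
proof -
  have e: "{i. i < length (x#X) \<and> (x#X)!i \<noteq> (y#Y)!i}
     = (if x\<noteq>y then {0} else {}) \<union> Suc ` {i. i<length X \<and> X!i \<noteq> Y!i}"
  proof (rule set_eqI)
    fix i show "i \<in> {i. i < length (x#X) \<and> (x#X)!i \<noteq> (y#Y)!i} \<longleftrightarrow>
       i \<in> (if x\<noteq>y then {0} else {}) \<union> Suc ` {i. i<length X \<and> X!i \<noteq> Y!i}"
      by (cases i) auto
  qed
  have "card ((if x\<noteq>y then {0} else {}) \<union> Suc ` {i. i<length X \<and> X!i \<noteq> Y!i})
     = card (if x\<noteq>y then {0::nat} else {}) + card (Suc ` {i. i<length X \<and> X!i \<noteq> Y!i})"
    by (rule card_Un_disjoint) auto
  also have "card (Suc ` {i. i<length X \<and> X!i \<noteq> Y!i}) = card {i. i<length X \<and> X!i \<noteq> Y!i}"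
    by (rule card_image) simp
  finally show ?thesis unfolding hamming_def e by simp
qed

lemma ham_diff: "length A = length X \<Longrightarrow>
   int (hamming X (replicate (length X) False)) - int (hamming X A) = dd A X"
proof (induction X arbitrary: A)
  case Nil then show ?case by (simp add: hamming_Nil)
next
  case (Cons x X)
  then obtain a A' where "A = a#A'" "length A' = length X" by (cases A) auto
  with Cons.IH[of A'] show ?case by (auto simp: hamming_Cons)
qed

lemma meas_filter: "meas \<mu> {X\<in>cube d. P X} = (\<Sum>X\<in>cube d. if P X then \<mu> X else 0)"
  unfolding meas_def by (simp add: sum.inter_filter finite_cube)

lemma payoff_zero:
  assumes "A \<in> cube d"
  shows "meas \<mu> (Vor d A (zeros d)) + meas \<mu> (Tie d A (zeros d)) / 2
       = (\<Sum>X\<in>cube d. (if dd A X > 0 then \<mu> X else if dd A X = 0 then \<mu> X / 2 else 0))"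
proof -
  have eq: "X \<in> cube d \<Longrightarrow> int (hamming X (zeros d)) - int (hamming X A) = dd A X" for X
    using ham_diff[of A X] assms by (auto simp: cube_def zeros_def)
  have "meas \<mu> (Vor d A (zeros d)) + meas \<mu> (Tie d A (zeros d)) / 2
      = (\<Sum>X\<in>cube d. if hamming X A < hamming X (zeros d) then \<mu> X else 0)
        + (\<Sum>X\<in>cube d. (if hamming X A = hamming X (zeros d) then \<mu> X else 0) / 2)"
    unfolding Vor_def Tie_def meas_filter sum_divide_distrib by simp
  also have "\<dots> = (\<Sum>X\<in>cube d. (if hamming X A < hamming X (zeros d) then \<mu> X else 0)
        + (if hamming X A = hamming X (zeros d) then \<mu> X else 0) / 2)"
    by (simp add: sum.distrib)
  also have "\<dots> = (\<Sum>X\<in>cube d. (if dd A X > 0 then \<mu> X else if dd A X = 0 then \<mu> X / 2 else 0))"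
  proof (rule sum.cong)
    fix X assume "X \<in> cube d"
    from eq[OF this] show "(if hamming X A < hamming X (zeros d) then \<mu> X else 0)
        + (if hamming X A = hamming X (zeros d) then \<mu> X else 0) / 2
       = (if dd A X > 0 then \<mu> X else if dd A X = 0 then \<mu> X / 2 else 0)" by auto
  qed simp
  finally show ?thesis .
qed

lemma payoff_bound:
  assumes "A \<in> cube d" "\<forall>X\<in>cube d. \<forall>Y\<in>cube d. vsubset X Y \<longrightarrow> \<mu> Y \<le> \<mu> X"
  shows "meas \<mu> (Vor d A (zeros d)) + meas \<mu> (Tie d A (zeros d)) / 2 \<le> (\<Sum>X\<in>cube d. \<mu> X) / 2"
proof -
  have c: "(\<Sum>X\<in>cube d. (if dd A X > 0 then \<mu> X else 0) - (if dd A X < -0 then \<mu> X else 0)) \<le> 0"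
    using core[of A d \<mu> 0] assms by (simp add: cube_def)
  have "(\<Sum>X\<in>cube d. (if dd A X > 0 then \<mu> X else if dd A X = 0 then \<mu> X / 2 else 0))
     = (\<Sum>X\<in>cube d. \<mu> X / 2 + ((if dd A X > 0 then \<mu> X else 0) - (if dd A X < -0 then \<mu> X else 0)) / 2)"
    by (rule sum.cong) auto
  also have "\<dots> = (\<Sum>X\<in>cube d. \<mu> X) / 2
      + (\<Sum>X\<in>cube d. (if dd A X > 0 then \<mu> X else 0) - (if dd A X < -0 then \<mu> X else 0)) / 2"
    by (simp add: sum.distrib sum_divide_distrib)
  finally show ?thesis using c payoff_zero[OF assms(1)] by simp
qed

lemma zeros_in: "zeros d \<in> cube d" by (simp add: zeros_def cube_def)
lemma ones_in: "ones d \<in> cube d" by (simp add: ones_def cube_def)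

lemma Tie_sym: "Tie d A B = Tie d B A" by (auto simp: Tie_def)

lemma zeros_eq:
  assumes "\<forall>X\<in>cube d. \<forall>Y\<in>cube d. vsubset X Y \<longrightarrow> \<mu> Y \<le> \<mu> X"
  shows "equilibrium d \<mu> (zeros d) (zeros d)"
proof -
  have self: "meas \<mu> (Vor d (zeros d) (zeros d)) + meas \<mu> (Tie d (zeros d) (zeros d)) / 2
     = (\<Sum>X\<in>cube d. \<mu> X) / 2"
    unfolding Vor_def Tie_def meas_def by simp
  show ?thesis unfolding equilibrium_def payoff1_def payoff2_def
    using payoff_bound[OF _ assms] self zeros_in Tie_sym by metis
qed

definition flip :: "bool list \<Rightarrow> bool list" where "flip = map Not"

lemma flip_flip[simp]: "flip (flip X) = X" by (simp add: flip_def comp_def)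
lemma flip_cube: "X \<in> cube d \<Longrightarrow> flip X \<in> cube d" by (simp add: flip_def cube_def)

lemma hamming_flip: "length X = length Y \<Longrightarrow> hamming (flip X) Y = hamming X (flip Y)"
  unfolding hamming_def flip_def by (rule arg_cong[where f=card]) auto

lemma sum_flip: "(\<Sum>X\<in>cube d. f X) = (\<Sum>X\<in>cube d. f (flip X))"
  by (rule sum.reindex_bij_witness[where i=flip and j=flip]) (auto simp: flip_cube)

lemma meas_flip:
  assumes "A \<in> cube d"  "B \<in> cube d"
  shows "meas \<mu> (Vor d A B) = meas (\<mu> \<circ> flip) (Vor d (flip A) (flip B))"
    "meas \<mu> (Tie d A B) = meas (\<mu> \<circ> flip) (Tie d (flip A) (flip B))"
proof -
  have h: "X \<in> cube d \<Longrightarrow> C \<in> cube d \<Longrightarrow> hamming (flip X) (flip C) = hamming X C" for X C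
    using hamming_flip[of X "flip C"] by (auto simp: flip_def cube_def comp_def)
  show "meas \<mu> (Vor d A B) = meas (\<mu> \<circ> flip) (Vor d (flip A) (flip B))"
    unfolding Vor_def meas_filter
    by (subst sum_flip) (rule sum.cong, auto simp: h flip_cube assms)
  show "meas \<mu> (Tie d A B) = meas (\<mu> \<circ> flip) (Tie d (flip A) (flip B))"
    unfolding Tie_def meas_filter
    by (subst sum_flip) (rule sum.cong, auto simp: h flip_cube assms)
qed

lemma ones_eq:
  assumes "\<forall>X\<in>cube d. \<forall>Y\<in>cube d. vsubset X Y \<longrightarrow> \<mu> X \<le> \<mu> Y"
  shows "equilibrium d \<mu> (ones d) (ones d)"
proof -
  have vf: "vsubset X Y \<Longrightarrow> vsubset (flip Y) (flip X)" for X Y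
    by (auto simp: vsubset_def flip_def)
  have "\<forall>X\<in>cube d. \<forall>Y\<in>cube d. vsubset X Y \<longrightarrow> (\<mu> \<circ> flip) Y \<le> (\<mu> \<circ> flip) X"
    using assms vf flip_cube by auto
  then have E: "equilibrium d (\<mu> \<circ> flip) (zeros d) (zeros d)" by (rule zeros_eq)
  have fo: "flip (ones d) = zeros d" by (simp add: flip_def ones_def zeros_def)
  show ?thesis unfolding equilibrium_def payoff1_def payoff2_def
  proof (intro conjI ballI)
    fix A' assume a: "A' \<in> cube d"
    show "meas \<mu> (Vor d A' (ones d)) + meas \<mu> (Tie d A' (ones d)) / 2
        \<le> meas \<mu> (Vor d (ones d) (ones d)) + meas \<mu> (Tie d (ones d) (ones d)) / 2"
      using E flip_cube[OF a] unfolding equilibrium_def payoff1_def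
      by (simp add: meas_flip[OF a ones_in] meas_flip[OF ones_in ones_in] fo)
  next
    fix B' assume a: "B' \<in> cube d"
    show "meas \<mu> (Vor d B' (ones d)) + meas \<mu> (Tie d (ones d) B') / 2
        \<le> meas \<mu> (Vor d (ones d) (ones d)) + meas \<mu> (Tie d (ones d) (ones d)) / 2"
      using E flip_cube[OF a] unfolding equilibrium_def payoff2_def
      by (simp add: meas_flip[OF a ones_in] meas_flip[OF ones_in a] meas_flip[OF ones_in ones_in] fo)
  qed (rule ones_in)+
qed

theorem mainTheorem7:
  fixes d :: nat and \<mu> :: "bool list \<Rightarrow> real"
  assumes "prob_dist d \<mu>"
  shows "((\<forall>X \<in> cube d. \<forall>Y \<in> cube d. vsubset X Y \<longrightarrow> \<mu> X \<ge> \<mu> Y)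
            \<longrightarrow> equilibrium d \<mu> (zeros d) (zeros d))
       \<and> ((\<forall>X \<in> cube d. \<forall>Y \<in> cube d. vsubset X Y \<longrightarrow> \<mu> X \<le> \<mu> Y)
            \<longrightarrow> equilibrium d \<mu> (ones d) (ones d))"
  using zeros_eq ones_eq by blast

end
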